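(* Let $\rho>0$, $\alpha>0$, $\beta>0$, let $P=(p_1,\dots,p_n)$ be a path and $Q=(q_1,\dots,q_m)$ a walk in $G$, and let $\pi:[n']\to[n]$ be the index map of the $\beta$-compression of $P$, with the conventions $\pi(0)=0$ and $\pi(n'+1)=n+1$. For every $i\in[n']$ and $j\in[m]$, if $M^\beta_\rho[\pi(i),j]=-1$, then $M^\beta_\rho[x,j]\neq 1$ (i.e. $M^\beta_\rho[x,j]\le 0$) for all integers $x$ with $\pi(i-1)<x<\pi(i+1)$.
   Context: $G$ is a planar graph with positive integer edge weights and shortest-path distance $d$. $\tilde d$ is any function ("perceived distance", e.g. given by a $(1+\alpha)$-stretch distance oracle) with $d(u,v)\le\tilde d(u,v)\le(1+\alpha)d(u,v)$ for all vertices $u,v$. The approximate free-space matrix $M^\beta_\rho$ is the $n\times m$ matrix with $M^\beta_\rho[i,j]=-1$ if $\tilde d(p_i,q_j)\le(1+\alpha)\rho$, $M^\beta_\rho[i,j]=1$ if $\tilde d(p_i,q_j)>(1+\alpha)(1+\alpha+\beta)\rho$, and $0$ otherwise. The length of $P[p_s,p_t]$ ($s\le t$) is the total weight of the edges of $P$ between positions $s$ and $t$. $\beta$-compression: let $S=\{1\}$ and anchor $c=1$; scanning $x=c+1,c+2,\dots$, the first $x$ with length of $P[p_c,p_x]\ge\beta\rho$ is added to $S$ and becomes the new anchor, and scanning continues; then for each $s\in S$ with $s>1$ also add $s-1$; finally add $n$. Let $n'$ be the size of the resulting index set and $\pi:[n']\to[n]$ its increasing enumeration; $P^\beta=(p_{\pi(1)},\dots,p_{\pi(n')})$.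 *)

theory Defs
  imports Complex_Main
begin

definition weighted_graph :: "'v set \<Rightarrow> ('v \<times> 'v) set \<Rightarrow> ('v \<Rightarrow> 'v \<Rightarrow> nat) \<Rightarrow> bool" where
  "weighted_graph V E w \<longleftrightarrow> finite V \<and> E \<subseteq> V \<times> V
     \<and> (\<forall>u v. (u, v) \<in> E \<longrightarrow> (v, u) \<in> E) \<and> (\<forall>u. (u, u) \<notin> E)
     \<and> (\<forall>u v. (u, v) \<in> E \<longrightarrow> w u v = w v u \<and> w u v > 0)"

definition is_walk :: "'v set \<Rightarrow> ('v \<times> 'v) set \<Rightarrow> 'v list \<Rightarrow> bool" where
  "is_walk V E xs \<longleftrightarrow> xs \<noteq> [] \<and> set xs \<subseteq> V
     \<and> (\<forall>k. Suc k < length xs \<longrightarrow> (xs ! k, xs ! Suc k) \<in> E)"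

definition walk_weight :: "('v \<Rightarrow> 'v \<Rightarrow> nat) \<Rightarrow> 'v list \<Rightarrow> nat" where
  "walk_weight w xs = (\<Sum>k<length xs - 1. w (xs ! k) (xs ! Suc k))"

definition connected_graph :: "'v set \<Rightarrow> ('v \<times> 'v) set \<Rightarrow> bool" where
  "connected_graph V E \<longleftrightarrow>
     (\<forall>u\<in>V. \<forall>v\<in>V. \<exists>xs. is_walk V E xs \<and> hd xs = u \<and> last xs = v)"

definition sp_dist :: "'v set \<Rightarrow> ('v \<times> 'v) set \<Rightarrow> ('v \<Rightarrow> 'v \<Rightarrow> nat) \<Rightarrow> 'v \<Rightarrow> 'v \<Rightarrow> real" where
  "sp_dist V E w u v = Inf {real (walk_weight w xs) | xs. is_walk V E xs \<and> hd xs = u \<and> last xs = v}"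

definition is_walk_seq :: "'v set \<Rightarrow> ('v \<times> 'v) set \<Rightarrow> (nat \<Rightarrow> 'v) \<Rightarrow> nat \<Rightarrow> bool" where
  "is_walk_seq V E p n \<longleftrightarrow> (\<forall>i\<in>{1..n}. p i \<in> V) \<and> (\<forall>i. 1 \<le> i \<and> i < n \<longrightarrow> (p i, p (Suc i)) \<in> E)"

definition is_path_seq :: "'v set \<Rightarrow> ('v \<times> 'v) set \<Rightarrow> (nat \<Rightarrow> 'v) \<Rightarrow> nat \<Rightarrow> bool" where
  "is_path_seq V E p n \<longleftrightarrow> is_walk_seq V E p n \<and> inj_on p {1..n}"

definition sub_len :: "('v \<Rightarrow> 'v \<Rightarrow> nat) \<Rightarrow> (nat \<Rightarrow> 'v) \<Rightarrow> nat \<Rightarrow> nat \<Rightarrow> real" where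
  "sub_len w p s t = (\<Sum>k\<in>{s..<t}. real (w (p k) (p (Suc k))))"

inductive comp_anchor :: "('v \<Rightarrow> 'v \<Rightarrow> nat) \<Rightarrow> (nat \<Rightarrow> 'v) \<Rightarrow> nat \<Rightarrow> real \<Rightarrow> real \<Rightarrow> nat \<Rightarrow> bool"
  for w p n \<beta> \<rho> where
  first: "comp_anchor w p n \<beta> \<rho> 1"
| next_anchor: "\<lbrakk> comp_anchor w p n \<beta> \<rho> c; c < x; x \<le> n; sub_len w p c x \<ge> \<beta> * \<rho>;
          \<forall>y. c < y \<and> y < x \<longrightarrow> sub_len w p c y < \<beta> * \<rho> \<rbrakk>
        \<Longrightarrow> comp_anchor w p n \<beta> \<rho> x"

definition comp_set :: "('v \<Rightarrow> 'v \<Rightarrow> nat) \<Rightarrow> (nat \<Rightarrow> 'v) \<Rightarrow> nat \<Rightarrow> real \<Rightarrow> real \<Rightarrow> nat set" where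
  "comp_set w p n \<beta> \<rho> =
     {c. comp_anchor w p n \<beta> \<rho> c} \<union> {c - 1 | c. comp_anchor w p n \<beta> \<rho> c \<and> c > 1} \<union> {n}"

definition comp_size :: "('v \<Rightarrow> 'v \<Rightarrow> nat) \<Rightarrow> (nat \<Rightarrow> 'v) \<Rightarrow> nat \<Rightarrow> real \<Rightarrow> real \<Rightarrow> nat" where
  "comp_size w p n \<beta> \<rho> = card (comp_set w p n \<beta> \<rho>)"

definition comp_pi :: "('v \<Rightarrow> 'v \<Rightarrow> nat) \<Rightarrow> (nat \<Rightarrow> 'v) \<Rightarrow> nat \<Rightarrow> real \<Rightarrow> real \<Rightarrow> nat \<Rightarrow> nat" where
  "comp_pi w p n \<beta> \<rho> i =
     (if i = 0 then 0
      else if i \<le> comp_size w p n \<beta> \<rho> then sorted_list_of_set (comp_set w p n \<beta> \<rho>) ! (i - 1)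
      else n + 1)"

definition freeM :: "('v \<Rightarrow> 'v \<Rightarrow> real) \<Rightarrow> real \<Rightarrow> real \<Rightarrow> real \<Rightarrow> (nat \<Rightarrow> 'v) \<Rightarrow> (nat \<Rightarrow> 'v) \<Rightarrow> nat \<Rightarrow> nat \<Rightarrow> int" where
  "freeM dt \<alpha> \<beta> \<rho> p q i j =
     (if dt (p i) (q j) \<le> (1 + \<alpha>) * \<rho> then -1
      else if dt (p i) (q j) > (1 + \<alpha>) * (1 + \<alpha> + \<beta>) * \<rho> then 1
      else 0)"

end

theory Submission
  imports Defs
begin

lemma ww_Cons: "walk_weight w (a # b # zs) = w a b + walk_weight w (b # zs)"
  unfolding walk_weight_def by (simp del: sum.lessThan_Suc add: sum.lessThan_Suc_shift)

lemma ww_single: "walk_weight w [a] = 0"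
  unfolding walk_weight_def by simp

lemma walk_single: "is_walk V E [a] \<longleftrightarrow> a \<in> V"
  unfolding is_walk_def by simp

lemma walk_Cons: "is_walk V E (a # b # zs) \<longleftrightarrow> a \<in> V \<and> (a,b) \<in> E \<and> is_walk V E (b # zs)"
proof
  assume h: "is_walk V E (a # b # zs)"
  then show "a \<in> V \<and> (a,b) \<in> E \<and> is_walk V E (b # zs)"
    unfolding is_walk_def
  proof (intro conjI)
    show "\<forall>k. Suc k < length (b # zs) \<longrightarrow> ((b # zs) ! k, (b # zs) ! Suc k) \<in> E"
      using h unfolding is_walk_def by (metis Suc_less_eq length_Cons nth_Cons_Suc)
  qed (auto simp: is_walk_def)
next
  assume h: "a \<in> V \<and> (a,b) \<in> E \<and> is_walk V E (b # zs)"
  show "is_walk V E (a # b # zs)"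
    unfolding is_walk_def
  proof (intro conjI allI impI)
    fix k assume k: "Suc k < length (a # b # zs)"
    show "((a # b # zs) ! k, (a # b # zs) ! Suc k) \<in> E"
    proof (cases k)
      case 0 then show ?thesis using h by simp
    next
      case (Suc k') then show ?thesis using h k unfolding is_walk_def by simp
    qed
  qed (use h in \<open>auto simp: is_walk_def\<close>)
qed

lemma walk_append:
  "is_walk V E xs \<Longrightarrow> is_walk V E ys \<Longrightarrow> last xs = hd ys \<Longrightarrow>
   is_walk V E (xs @ tl ys) \<and> walk_weight w (xs @ tl ys) = walk_weight w xs + walk_weight w ys"
proof (induction xs)
  case Nil then show ?case by (simp add: is_walk_def)
next
  case (Cons a xs)
  show ?case
  proof (cases xs)
    case Nil
    then have "ys = a # tl ys" using Cons.prems
      by (metis hd_Cons_tl is_walk_def last_ConsL)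
    then show ?thesis using Nil Cons.prems by (simp add: ww_single)
  next
    case (Cons b zs)
    have w1: "is_walk V E (b # zs)" and a: "a \<in> V" "(a,b) \<in> E"
      using Cons.prems(1) unfolding Cons walk_Cons by auto
    have "last (b # zs) = hd ys" using Cons.prems(3) Cons by simp
    then have IH: "is_walk V E ((b # zs) @ tl ys) \<and>
       walk_weight w ((b # zs) @ tl ys) = walk_weight w (b # zs) + walk_weight w ys"
      using Cons.IH w1 Cons.prems(2) Cons by simp
    show ?thesis using IH a unfolding Cons by (simp add: walk_Cons ww_Cons)
  qed
qed

lemma sp_le: "is_walk V E xs \<Longrightarrow> sp_dist V E w (hd xs) (last xs) \<le> real (walk_weight w xs)"
  unfolding sp_dist_def by (rule cInf_lower) (auto intro: bdd_belowI[of _ 0])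

lemma sp_tri:
  assumes conn: "connected_graph V E" and xs: "is_walk V E xs" and v: "v \<in> V"
  shows "sp_dist V E w (hd xs) v \<le> real (walk_weight w xs) + sp_dist V E w (last xs) v"
proof -
  let ?Y = "{real (walk_weight w ys) | ys. is_walk V E ys \<and> hd ys = last xs \<and> last ys = v}"
  have lxV: "last xs \<in> V" using xs unfolding is_walk_def by auto
  obtain ys0 where "is_walk V E ys0" "hd ys0 = last xs" "last ys0 = v"
    using conn lxV v unfolding connected_graph_def by blast
  then have ne: "?Y \<noteq> {}" by blast
  have "sp_dist V E w (hd xs) v - real (walk_weight w xs) \<le> y" if yY: "y \<in> ?Y" for y
  proof -
    obtain ys where ys: "is_walk V E ys" "hd ys = last xs" "last ys = v" "y = real (walk_weight w ys)"
      using yY by auto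
    have A: "is_walk V E (xs @ tl ys) \<and> walk_weight w (xs @ tl ys) = walk_weight w xs + walk_weight w ys"
      using walk_append[OF xs ys(1)] ys(2) by simp
    have xne: "xs \<noteq> []" and yne: "ys \<noteq> []" using xs ys(1) unfolding is_walk_def by auto
    have h: "hd (xs @ tl ys) = hd xs" using xne by simp
    have l: "last (xs @ tl ys) = v"
    proof (cases "tl ys = []")
      case True
      then have "ys = [hd ys]" using yne by (metis hd_Cons_tl)
      then show ?thesis using True ys by (metis append_Nil2 last_ConsL)
    next
      case False
      then show ?thesis using ys(3) yne by (metis hd_Cons_tl last_ConsR last_appendR)
    qed
    have "sp_dist V E w (hd xs) v \<le> real (walk_weight w (xs @ tl ys))"
      using sp_le[of V E "xs @ tl ys" w] A h l by simp
    then show ?thesis using A ys(4) by simp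
  qed
  then have "sp_dist V E w (hd xs) v - real (walk_weight w xs) \<le> Inf ?Y"
    using ne by (intro cInf_greatest) auto
  then show ?thesis unfolding sp_dist_def by simp
qed

lemma seg_up:
  assumes E: "\<And>k. 1 \<le> k \<Longrightarrow> k < N \<Longrightarrow> (p k, p (Suc k)) \<in> E" and V: "\<And>k. 1 \<le> k \<Longrightarrow> k \<le> N \<Longrightarrow> p k \<in> V"
  shows "1 \<le> s \<Longrightarrow> s \<le> t \<Longrightarrow> t \<le> N \<Longrightarrow> is_walk V E (map p [s..<Suc t]) \<and>
     real (walk_weight w (map p [s..<Suc t])) = sub_len w p s t"
proof (induction t)
  case 0
  then show ?case using V by (simp add: walk_single ww_single sub_len_def)
next
  case (Suc t)
  show ?case
  proof (cases "s = Suc t")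
    case True
    then show ?thesis using V Suc.prems by (simp add: walk_single ww_single sub_len_def)
  next
    case False
    then have st: "s \<le> t" using Suc.prems by simp
    have IH: "is_walk V E (map p [s..<Suc t]) \<and>
     real (walk_weight w (map p [s..<Suc t])) = sub_len w p s t" using Suc st by simp
    have w2: "is_walk V E [p t, p (Suc t)]" using E V Suc.prems st
      by (simp add: walk_Cons walk_single)
    have eq: "map p [s..<Suc (Suc t)] = map p [s..<Suc t] @ tl [p t, p (Suc t)]"
      using st by simp
    note A = walk_append[OF IH[THEN conjunct1] w2, of w]
    have sl: "sub_len w p s (Suc t) = sub_len w p s t + real (w (p t) (p (Suc t)))"
      unfolding sub_len_def using st by simp
    show ?thesis unfolding eq using A IH sl st by (simp add: ww_Cons ww_single)
  qed
qed

lemma seg_down: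
  assumes E: "\<And>k. 1 \<le> k \<Longrightarrow> k < N \<Longrightarrow> (p k, p (Suc k)) \<in> E" and V: "\<And>k. 1 \<le> k \<Longrightarrow> k \<le> N \<Longrightarrow> p k \<in> V"
    and symE: "\<And>u v. (u,v) \<in> E \<Longrightarrow> (v,u) \<in> E \<and> w u v = w v u"
  shows "1 \<le> s \<Longrightarrow> s \<le> t \<Longrightarrow> t \<le> N \<Longrightarrow> is_walk V E (map p (rev [s..<Suc t])) \<and>
     real (walk_weight w (map p (rev [s..<Suc t]))) = sub_len w p s t"
proof (induction t)
  case 0
  then show ?case using V by (simp add: walk_single ww_single sub_len_def)
next
  case (Suc t)
  show ?case
  proof (cases "s = Suc t")
    case True
    then show ?thesis using V Suc.prems by (simp add: walk_single ww_single sub_len_def)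
  next
    case False
    then have st: "s \<le> t" using Suc.prems by simp
    have IH: "is_walk V E (map p (rev [s..<Suc t])) \<and>
     real (walk_weight w (map p (rev [s..<Suc t]))) = sub_len w p s t" using Suc st by simp
    have e: "(p t, p (Suc t)) \<in> E" using E Suc.prems st by simp
    have w2: "is_walk V E [p (Suc t), p t]" using e symE V Suc.prems st
      by (simp add: walk_Cons walk_single)
    have ys: "map p (rev [s..<Suc t]) = p t # map p (rev [s..<t])"
      using st by simp
    have eq: "map p (rev [s..<Suc (Suc t)]) = [p (Suc t), p t] @ tl (map p (rev [s..<Suc t]))"
      using st ys by simp
    note A = walk_append[OF w2 IH[THEN conjunct1], of w]
    have sl: "sub_len w p s (Suc t) = sub_len w p s t + real (w (p t) (p (Suc t)))"
      unfolding sub_len_def using st by simp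
    show ?thesis unfolding eq using A IH sl st ys symE[OF e] by (simp add: ww_Cons ww_single)
  qed
qed

lemma anchor_range: "comp_anchor w p n \<beta> \<rho> c \<Longrightarrow> 1 \<le> n \<Longrightarrow> 1 \<le> c \<and> c \<le> n"
  by (induction rule: comp_anchor.induct) auto

lemma S_range: assumes "c \<in> comp_set w p n \<beta> \<rho>" "1 \<le> n" shows "1 \<le> c \<and> c \<le> n"
proof -
  have "comp_anchor w p n \<beta> \<rho> c \<or> (\<exists>d. c = d - 1 \<and> comp_anchor w p n \<beta> \<rho> d \<and> d > 1) \<or> c = n"
    using assms(1) unfolding comp_set_def by blast
  then show ?thesis
  proof (elim disjE exE conjE)
    fix d assume "c = d - 1" "comp_anchor w p n \<beta> \<rho> d" "d > 1"
    then show ?thesis using anchor_range[of w p n \<beta> \<rho> d] assms(2) by linarith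
  qed (use anchor_range[of w p n \<beta> \<rho> c] assms(2) in auto)
qed

lemma S_finite: assumes n1: "1 \<le> n" shows "finite (comp_set w p n \<beta> \<rho>)"
proof -
  have "comp_set w p n \<beta> \<rho> \<subseteq> {1..n}"
  proof
    fix c assume "c \<in> comp_set w p n \<beta> \<rho>"
    from S_range[OF this n1] show "c \<in> {1..n}" by simp
  qed
  then show ?thesis by (rule finite_subset) simp
qed

lemma sub_len_nonneg: "0 \<le> sub_len w p s t"
  unfolding sub_len_def by (simp add: sum_nonneg)

lemma sub_len_mono_left: "a \<le> x \<Longrightarrow> sub_len w p x c \<le> sub_len w p a c"
  unfolding sub_len_def by (rule sum_mono2) auto

lemma sub_len_mono_right: "x \<le> c \<Longrightarrow> sub_len w p a x \<le> sub_len w p a c"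
  unfolding sub_len_def by (rule sum_mono2) auto

lemma gap_key:
  assumes a: "comp_anchor w p n \<beta> \<rho> a" and ay: "a < y" and yn: "y \<le> n"
    and no: "\<not> (\<exists>a'. comp_anchor w p n \<beta> \<rho> a' \<and> a < a' \<and> a' \<le> y)"
  shows "sub_len w p a y < \<beta> * \<rho>"
proof (rule ccontr)
  assume nt: "\<not> ?thesis"
  let ?P = "\<lambda>z. a < z \<and> z \<le> n \<and> sub_len w p a z \<ge> \<beta> * \<rho>"
  have yY: "?P y" using ay yn nt by simp
  define a' where "a' = (LEAST z. ?P z)"
  have a'Y: "?P a'" unfolding a'_def by (rule LeastI[of ?P y]) (rule yY)
  have a'y: "a' \<le> y" unfolding a'_def by (rule Least_le) (rule yY)
  have below: "\<forall>z. a < z \<and> z < a' \<longrightarrow> sub_len w p a z < \<beta> * \<rho>"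
  proof (intro allI impI)
    fix z assume z: "a < z \<and> z < a'"
    have "\<not> ?P z" unfolding a'_def by (rule not_less_Least) (use z a'_def in simp)
    moreover have "z \<le> n" using z a'Y by simp
    ultimately show "sub_len w p a z < \<beta> * \<rho>" using z by simp
  qed
  have "comp_anchor w p n \<beta> \<rho> a'"
    by (rule comp_anchor.next_anchor[OF a]) (use a'Y below in simp_all)
  then have "\<exists>a'. comp_anchor w p n \<beta> \<rho> a' \<and> a < a' \<and> a' \<le> y" using a'Y a'y by blast
  then show False using no by blast
qed

lemma max_anchor:
  assumes "1 \<le> x"
  obtains a where "comp_anchor w p n \<beta> \<rho> a" "a \<le> x"
    "\<And>z. comp_anchor w p n \<beta> \<rho> z \<Longrightarrow> z \<le> x \<Longrightarrow> z \<le> a"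
proof -
  let ?A = "{c. comp_anchor w p n \<beta> \<rho> c \<and> c \<le> x}"
  have f: "finite ?A" by (rule finite_subset[of _ "{..x}"]) auto
  have ne: "1 \<in> ?A" using assms comp_anchor.first by simp
  have m: "Max ?A \<in> ?A" using f ne by (intro Max_in) auto
  have g: "\<And>z. comp_anchor w p n \<beta> \<rho> z \<Longrightarrow> z \<le> x \<Longrightarrow> z \<le> Max ?A"
    using f by (intro Max_ge) simp_all
  show ?thesis
    by (rule that[of "Max ?A"]) (use m g in simp_all)
qed

lemma claimA:
  assumes n1: "1 \<le> n" and c: "c \<in> comp_set w p n \<beta> \<rho>" and cx: "c < x" and xn: "x \<le> n"
    and no: "\<And>s. s \<in> comp_set w p n \<beta> \<rho> \<Longrightarrow> c < s \<Longrightarrow> s \<le> x \<Longrightarrow> False"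
  shows "sub_len w p c x \<le> \<beta> * \<rho>"
proof -
  have c1: "1 \<le> c" using S_range[OF c n1] by simp
  obtain a where a: "comp_anchor w p n \<beta> \<rho> a" "a \<le> c"
    "\<And>z. comp_anchor w p n \<beta> \<rho> z \<Longrightarrow> z \<le> c \<Longrightarrow> z \<le> a"
    using max_anchor[OF c1] by blast
  have "\<not> (\<exists>a'. comp_anchor w p n \<beta> \<rho> a' \<and> a < a' \<and> a' \<le> x)"
  proof
    assume "\<exists>a'. comp_anchor w p n \<beta> \<rho> a' \<and> a < a' \<and> a' \<le> x"
    then obtain a' where a': "comp_anchor w p n \<beta> \<rho> a'" "a < a'" "a' \<le> x" by blast
    have "c < a'"
    proof (rule ccontr)
      assume "\<not> c < a'" then have "a' \<le> c" by simp
      then have "a' \<le> a" by (rule a(3)[OF a'(1)])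
      with a'(2) show False by simp
    qed
    moreover have "a' \<in> comp_set w p n \<beta> \<rho>" using a'(1) unfolding comp_set_def by auto
    ultimately show False using no a'(3) by blast
  qed
  then have "sub_len w p a x < \<beta> * \<rho>" using gap_key[OF a(1) _ xn] a(2) cx by simp
  moreover have "sub_len w p c x \<le> sub_len w p a x" using a(2) by (rule sub_len_mono_left)
  ultimately show ?thesis by simp
qed

lemma claimB:
  assumes n1: "1 \<le> n" and c: "c \<in> comp_set w p n \<beta> \<rho>" and xc: "x < c" and x1: "1 \<le> x"
    and no: "\<And>s. s \<in> comp_set w p n \<beta> \<rho> \<Longrightarrow> x \<le> s \<Longrightarrow> s < c \<Longrightarrow> False"
  shows "sub_len w p x c \<le> \<beta> * \<rho>"
proof -
  have cn: "c \<le> n" using S_range[OF c n1] by simp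
  obtain a where a: "comp_anchor w p n \<beta> \<rho> a" "a \<le> x"
    "\<And>z. comp_anchor w p n \<beta> \<rho> z \<Longrightarrow> z \<le> x \<Longrightarrow> z \<le> a"
    using max_anchor[OF x1] by blast
  have "\<not> (\<exists>a'. comp_anchor w p n \<beta> \<rho> a' \<and> a < a' \<and> a' \<le> c)"
  proof
    assume "\<exists>a'. comp_anchor w p n \<beta> \<rho> a' \<and> a < a' \<and> a' \<le> c"
    then obtain a' where a': "comp_anchor w p n \<beta> \<rho> a'" "a < a'" "a' \<le> c" by blast
    have xa': "x < a'"
    proof (rule ccontr)
      assume "\<not> x < a'" then have "a' \<le> x" by simp
      then have "a' \<le> a" by (rule a(3)[OF a'(1)])
      with a'(2) show False by simp
    qed
    moreover have "a' - 1 \<in> comp_set w p n \<beta> \<rho>" using a'(1) xa' x1 unfolding comp_set_def by auto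
    moreover have "x \<le> a' - 1" "a' - 1 < c" using xa' a'(3) by auto
    ultimately show False using no[of "a' - 1"] by blast
  qed
  then have "sub_len w p a c < \<beta> * \<rho>" using gap_key[OF a(1) _ cn] a(2) xc by simp
  moreover have "sub_len w p x c \<le> sub_len w p a c" using a(2) by (rule sub_len_mono_left)
  ultimately show ?thesis by simp
qed

lemma list_next:
  fixes L :: "nat list"
  assumes "sorted L" "k < length L" "i < length L" "L ! i < L ! k"
  shows "Suc i < length L \<and> L ! Suc i \<le> L ! k"
proof -
  have "i < k"
  proof (rule ccontr)
    assume "\<not> i < k" then have "k \<le> i" by simp
    then have "L ! k \<le> L ! i" using assms by (intro sorted_nth_mono) auto
    then show False using assms(4) by simp
  qed
  then show ?thesis using assms by (auto intro: sorted_nth_mono)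
qed

lemma list_prev:
  fixes L :: "nat list"
  assumes "sorted L" "k < length L" "i < length L" "L ! k < L ! i"
  shows "0 < i \<and> L ! k \<le> L ! (i - 1)"
proof -
  have "k < i"
  proof (rule ccontr)
    assume "\<not> k < i" then have "i \<le> k" by simp
    then have "L ! i \<le> L ! k" using assms by (intro sorted_nth_mono) auto
    then show False using assms(4) by simp
  qed
  then show ?thesis using assms by (auto intro: sorted_nth_mono)
qed

lemma pi_basic:
  assumes n1: "1 \<le> n"
  shows "length (sorted_list_of_set (comp_set w p n \<beta> \<rho>)) = comp_size w p n \<beta> \<rho>"
    "set (sorted_list_of_set (comp_set w p n \<beta> \<rho>)) = comp_set w p n \<beta> \<rho>"
    "sorted (sorted_list_of_set (comp_set w p n \<beta> \<rho>))"
  using S_finite[OF n1, of w p \<beta> \<rho>] by (auto simp: comp_size_def)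

lemma pi_in:
  assumes n1: "1 \<le> n" and i: "1 \<le> i" "i \<le> comp_size w p n \<beta> \<rho>"
  shows "comp_pi w p n \<beta> \<rho> i \<in> comp_set w p n \<beta> \<rho>"
proof -
  note B = pi_basic[OF n1, of w p \<beta> \<rho>]
  have "comp_pi w p n \<beta> \<rho> i = sorted_list_of_set (comp_set w p n \<beta> \<rho>) ! (i - 1)"
    using i unfolding comp_pi_def by simp
  moreover have "i - 1 < length (sorted_list_of_set (comp_set w p n \<beta> \<rho>))" using B i by simp
  ultimately show ?thesis using B(2) nth_mem by metis
qed

lemma pi_next:
  assumes n1: "1 \<le> n" and i: "1 \<le> i" "i \<le> comp_size w p n \<beta> \<rho>"
    and s: "s \<in> comp_set w p n \<beta> \<rho>" and lt: "comp_pi w p n \<beta> \<rho> i < s"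
  shows "comp_pi w p n \<beta> \<rho> (i + 1) \<le> s"
proof -
  note B = pi_basic[OF n1, of w p \<beta> \<rho>]
  define L where "L = sorted_list_of_set (comp_set w p n \<beta> \<rho>)"
  obtain k where k: "k < length L" "L ! k = s" using s B(2) unfolding L_def[symmetric]
    by (metis in_set_conv_nth)
  have pi: "comp_pi w p n \<beta> \<rho> i = L ! (i - 1)" using i unfolding comp_pi_def L_def by simp
  have "Suc (i - 1) < length L \<and> L ! Suc (i - 1) \<le> L ! k"
    using list_next[of L k "i - 1"] B k lt pi i unfolding L_def by simp
  moreover have "comp_pi w p n \<beta> \<rho> (i + 1) = L ! Suc (i - 1)"
    using calculation i B unfolding comp_pi_def L_def by simp
  ultimately show ?thesis using k by simp
qed

lemma pi_prev:
  assumes n1: "1 \<le> n" and i: "1 \<le> i" "i \<le> comp_size w p n \<beta> \<rho>"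
    and s: "s \<in> comp_set w p n \<beta> \<rho>" and lt: "s < comp_pi w p n \<beta> \<rho> i"
  shows "s \<le> comp_pi w p n \<beta> \<rho> (i - 1)"
proof -
  note B = pi_basic[OF n1, of w p \<beta> \<rho>]
  define L where "L = sorted_list_of_set (comp_set w p n \<beta> \<rho>)"
  obtain k where k: "k < length L" "L ! k = s" using s B(2) unfolding L_def[symmetric]
    by (metis in_set_conv_nth)
  have pi: "comp_pi w p n \<beta> \<rho> i = L ! (i - 1)" using i unfolding comp_pi_def L_def by simp
  have "0 < i - 1 \<and> L ! k \<le> L ! (i - 1 - 1)"
    using list_prev[of L k "i - 1"] B k lt pi i unfolding L_def by simp
  moreover have "comp_pi w p n \<beta> \<rho> (i - 1) = L ! (i - 1 - 1)"
  proof -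
    have "i - 1 \<noteq> 0" "i - 1 \<le> comp_size w p n \<beta> \<rho>" using calculation i by auto
    then show ?thesis unfolding comp_pi_def L_def by simp
  qed
  ultimately show ?thesis using k by simp
qed

lemma pi_bound:
  assumes n1: "1 \<le> n"
  shows "comp_pi w p n \<beta> \<rho> i \<le> n + 1"
proof (cases "i = 0 \<or> i > comp_size w p n \<beta> \<rho>")
  case True then show ?thesis unfolding comp_pi_def by auto
next
  case False
  then have "1 \<le> i" "i \<le> comp_size w p n \<beta> \<rho>" by auto
  then have "comp_pi w p n \<beta> \<rho> i \<in> comp_set w p n \<beta> \<rho>" by (rule pi_in[OF n1])
  from S_range[OF this n1] show ?thesis by simp
qed

theorem mainTheorem6:
  fixes V :: "'v set" and E :: "('v \<times> 'v) set" and w :: "'v \<Rightarrow> 'v \<Rightarrow> nat"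
    and dt :: "'v \<Rightarrow> 'v \<Rightarrow> real"
    and p q :: "nat \<Rightarrow> 'v" and n m :: nat and \<rho> \<alpha> \<beta> :: real
  assumes G: "weighted_graph V E w" and conn: "connected_graph V E"
    and dt_lo: "\<And>u v. u \<in> V \<Longrightarrow> v \<in> V \<Longrightarrow> sp_dist V E w u v \<le> dt u v"
    and dt_hi: "\<And>u v. u \<in> V \<Longrightarrow> v \<in> V \<Longrightarrow> dt u v \<le> (1 + \<alpha>) * sp_dist V E w u v"
    and \<rho>: "\<rho> > 0" and \<alpha>: "\<alpha> > 0" and \<beta>: "\<beta> > 0"
    and P: "is_path_seq V E p n" and n1: "n \<ge> 1"
    and Q: "is_walk_seq V E q m"
    and i: "i \<in> {1..comp_size w p n \<beta> \<rho>}" and j: "j \<in> {1..m}"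
    and M: "freeM dt \<alpha> \<beta> \<rho> p q (comp_pi w p n \<beta> \<rho> i) j = -1"
  shows "\<forall>x::nat. comp_pi w p n \<beta> \<rho> (i - 1) < x \<and> x < comp_pi w p n \<beta> \<rho> (i + 1)
           \<longrightarrow> freeM dt \<alpha> \<beta> \<rho> p q x j \<noteq> 1"
proof (intro allI impI)
  fix x assume x: "comp_pi w p n \<beta> \<rho> (i - 1) < x \<and> x < comp_pi w p n \<beta> \<rho> (i + 1)"
  define c where "c = comp_pi w p n \<beta> \<rho> i"
  have i1: "1 \<le> i" "i \<le> comp_size w p n \<beta> \<rho>" using i by auto
  have cS: "c \<in> comp_set w p n \<beta> \<rho>" unfolding c_def using pi_in[OF n1 i1] .
  have c1n: "1 \<le> c" "c \<le> n" using S_range[OF cS n1] by auto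
  have x1: "1 \<le> x" using x by simp
  have xn: "x \<le> n" using x pi_bound[OF n1, of w p \<beta> \<rho> "i + 1"] by simp
  have symE: "\<And>u v. (u,v) \<in> E \<Longrightarrow> (v,u) \<in> E \<and> w u v = w v u"
  proof -
    fix u v assume "(u,v) \<in> E"
    moreover have "\<forall>u v. (u, v) \<in> E \<longrightarrow> (v, u) \<in> E"
      "\<forall>u v. (u, v) \<in> E \<longrightarrow> w u v = w v u \<and> w u v > 0"
      using G unfolding weighted_graph_def by simp_all
    ultimately show "(v,u) \<in> E \<and> w u v = w v u" by simp
  qed
  have PE: "\<And>k. 1 \<le> k \<Longrightarrow> k < n \<Longrightarrow> (p k, p (Suc k)) \<in> E"
    using P unfolding is_path_seq_def is_walk_seq_def by blast
  have PV: "\<And>k. 1 \<le> k \<Longrightarrow> k \<le> n \<Longrightarrow> p k \<in> V"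
    using P unfolding is_path_seq_def is_walk_seq_def by auto
  have qV: "q j \<in> V" using Q j unfolding is_walk_seq_def by auto
  have dtc: "dt (p c) (q j) \<le> (1 + \<alpha>) * \<rho>"
  proof (rule ccontr)
    assume "\<not> dt (p c) (q j) \<le> (1 + \<alpha>) * \<rho>"
    then have "freeM dt \<alpha> \<beta> \<rho> p q c j \<noteq> -1" unfolding freeM_def by simp
    then show False using M unfolding c_def by simp
  qed
  show "freeM dt \<alpha> \<beta> \<rho> p q x j \<noteq> 1"
  proof (cases "x = c")
    case True
    then show ?thesis using M unfolding c_def by simp
  next
    case False
    have "\<exists>xs. is_walk V E xs \<and> hd xs = p x \<and> last xs = p c \<and> real (walk_weight w xs) \<le> \<beta> * \<rho>"
    proof (cases "c < x")
      case True
      have "sub_len w p c x \<le> \<beta> * \<rho>"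
      proof (rule claimA[OF n1 cS True xn])
        fix s assume s: "s \<in> comp_set w p n \<beta> \<rho>" "c < s" "s \<le> x"
        have "comp_pi w p n \<beta> \<rho> (i + 1) \<le> s" using pi_next[OF n1 i1 s(1)] s(2) c_def by simp
        then show False using s(3) x by simp
      qed
      moreover have "is_walk V E (map p (rev [c..<Suc x])) \<and>
          real (walk_weight w (map p (rev [c..<Suc x]))) = sub_len w p c x"
        by (rule seg_down[where N=n and p=p and E=E and V=V and w=w and s=c and t=x, OF PE PV symE])
           (use c1n True xn in simp_all)
      moreover have "hd (map p (rev [c..<Suc x])) = p x" "last (map p (rev [c..<Suc x])) = p c"
        using True by (simp_all add: hd_map last_map last_rev hd_upt)
      ultimately show ?thesis by (intro exI[of _ "map p (rev [c..<Suc x])"]) simp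
    next
      case False
      then have xc: "x < c" using \<open>x \<noteq> c\<close> by simp
      have "sub_len w p x c \<le> \<beta> * \<rho>"
      proof (rule claimB[OF n1 cS xc x1])
        fix s assume s: "s \<in> comp_set w p n \<beta> \<rho>" "x \<le> s" "s < c"
        have "s \<le> comp_pi w p n \<beta> \<rho> (i - 1)" using pi_prev[OF n1 i1 s(1)] s(3) c_def by simp
        then show False using s(2) x by simp
      qed
      moreover have "is_walk V E (map p [x..<Suc c]) \<and>
          real (walk_weight w (map p [x..<Suc c])) = sub_len w p x c"
        by (rule seg_up[where N=n and p=p and E=E and V=V and w=w and s=x and t=c, OF PE PV])
           (use c1n xc x1 in simp_all)
      moreover have "hd (map p [x..<Suc c]) = p x" "last (map p [x..<Suc c]) = p c"
        using xc by (simp_all add: hd_map last_map)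
      ultimately show ?thesis by (intro exI[of _ "map p [x..<Suc c]"]) simp
    qed
    then obtain xs where xs: "is_walk V E xs" "hd xs = p x" "last xs = p c"
      "real (walk_weight w xs) \<le> \<beta> * \<rho>" by blast
    have "sp_dist V E w (p x) (q j) \<le> real (walk_weight w xs) + sp_dist V E w (p c) (q j)"
      using sp_tri[OF conn xs(1) qV] xs by simp
    moreover have "sp_dist V E w (p c) (q j) \<le> dt (p c) (q j)" using dt_lo[OF PV[OF c1n] qV] .
    ultimately have "sp_dist V E w (p x) (q j) \<le> (1 + \<alpha> + \<beta>) * \<rho>"
      using xs(4) dtc by (simp add: algebra_simps)
    then have "(1 + \<alpha>) * sp_dist V E w (p x) (q j) \<le> (1 + \<alpha>) * ((1 + \<alpha> + \<beta>) * \<rho>)"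
      using \<alpha> by (intro mult_left_mono) auto
    then have "dt (p x) (q j) \<le> (1 + \<alpha>) * (1 + \<alpha> + \<beta>) * \<rho>"
      using dt_hi[OF PV[OF x1 xn] qV] by (simp add: mult.assoc)
    then have "\<not> dt (p x) (q j) > (1 + \<alpha>) * (1 + \<alpha> + \<beta>) * \<rho>" by simp
    then show ?thesis unfolding freeM_def by simp
  qed
qed

end
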